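(* Let $\mathcal{F}$ be a family of $n$ pseudo-parabolas in the plane and let $k$ be a positive integer. Then the number of intersection points of two curves in $\mathcal{F}$ that lie strictly above at most $k-2$ other curves in $\mathcal{F}$ is at most $2(k-1)n$.
   Context: A family of pseudo-parabolas is a family of bi-infinite $x$-monotone curves in the plane (graphs of continuous functions defined on all of $\mathbb{R}$), every two of which intersect in at most two points. *)

theory Defs
  imports Complex_Main
begin

definition pseudo_parabolas :: "(real \<Rightarrow> real) set \<Rightarrow> bool" where
  "pseudo_parabolas F \<longleftrightarrow>
     (\<forall>f\<in>F. continuous_on UNIV f) \<and>
     (\<forall>f\<in>F. \<forall>g\<in>F. f \<noteq> g \<longrightarrow> finite {x. f x = g x} \<and> card {x. f x = g x} \<le> 2)"

definition low_vertices :: "(real \<Rightarrow> real) set \<Rightarrow> int \<Rightarrow> (real \<times> real) set" where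
  "low_vertices F m =
     {(x, y). (\<exists>f\<in>F. \<exists>g\<in>F. f \<noteq> g \<and> f x = y \<and> g x = y) \<and>
              int (card {h\<in>F. h x < y}) \<le> m}"

end

theory Submission
  imports Defs
begin

lemma ivt_left:
  fixes h :: "real \<Rightarrow> real"
  assumes c: "continuous_on UNIV h" and nz: "\<forall>z<x. h z \<noteq> 0"
    and "a < x" "b < x" "h a < 0"
  shows "h b < 0"
proof (rule ccontr)
  assume "\<not> h b < 0"
  hence hb: "h b \<ge> 0" by simp
  show False
  proof (cases "a \<le> b")
    case True
    have "continuous_on {a..b} h" using c continuous_on_subset by blast
    then obtain z where "a \<le> z" "z \<le> b" "h z = 0"
      using IVT'[of h a 0 b] True hb assms(5) by auto
    thus False using nz assms(4) by auto
  next
    case False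
    have "continuous_on {b..a} h" using c continuous_on_subset by blast
    then obtain z where "b \<le> z" "z \<le> a" "h z = 0"
      using IVT2'[of h a 0 b] False hb assms(5) by auto
    thus False using nz assms(3) by auto
  qed
qed

lemma ivt_right:
  fixes h :: "real \<Rightarrow> real"
  assumes c: "continuous_on UNIV h" and nz: "\<forall>z>x. h z \<noteq> 0"
    and "a > x" "b > x" "h a < 0"
  shows "h b < 0"
proof (rule ccontr)
  assume "\<not> h b < 0"
  hence hb: "h b \<ge> 0" by simp
  show False
  proof (cases "a \<le> b")
    case True
    have "continuous_on {a..b} h" using c continuous_on_subset by blast
    then obtain z where "a \<le> z" "z \<le> b" "h z = 0"
      using IVT'[of h a 0 b] True hb assms(5) by auto
    thus False using nz assms(3) by auto
  next
    case False
    have "continuous_on {b..a} h" using c continuous_on_subset by blast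
    then obtain z where "b \<le> z" "z \<le> a" "h z = 0"
      using IVT2'[of h a 0 b] False hb assms(5) by auto
    thus False using nz assms(4) by auto
  qed
qed

lemma side_free:
  assumes P: "pseudo_parabolas F" and f: "f \<in> F" and g: "g \<in> F" and ne: "f \<noteq> g"
    and e: "f x = g x"
  shows "(\<forall>t<x. f t < g t) \<or> (\<forall>t<x. g t < f t) \<or> (\<forall>t>x. f t < g t) \<or> (\<forall>t>x. g t < f t)"
proof -
  let ?Z = "{t. f t = g t}"
  have fin: "finite ?Z" and c2: "card ?Z \<le> 2" using P f g ne unfolding pseudo_parabolas_def by auto
  have cf: "continuous_on UNIV f" and cg: "continuous_on UNIV g"
    using P f g unfolding pseudo_parabolas_def by auto
  have ch: "continuous_on UNIV (\<lambda>t. f t - g t)" using cf cg by (intro continuous_intros)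
  have ch2: "continuous_on UNIV (\<lambda>t. g t - f t)" using cf cg by (intro continuous_intros)
  have "(\<forall>t<x. f t \<noteq> g t) \<or> (\<forall>t>x. f t \<noteq> g t)"
  proof (rule ccontr)
    assume "\<not> ?thesis"
    then obtain t1 t2 where t1: "t1 < x" "f t1 = g t1" and t2: "t2 > x" "f t2 = g t2" by auto
    have "{t1, x, t2} \<subseteq> ?Z" using t1 t2 e by auto
    hence "card {t1, x, t2} \<le> card ?Z" using fin by (rule card_mono[rotated])
    moreover have "card {t1, x, t2} = 3" using t1 t2 by auto
    ultimately show False using c2 by simp
  qed
  thus ?thesis
  proof
    assume nz: "\<forall>t<x. f t \<noteq> g t"
    have nz1: "\<forall>z<x. f z - g z \<noteq> 0" and nz2: "\<forall>z<x. g z - f z \<noteq> 0" using nz by auto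
    have "x - 1 < x" by simp
    show ?thesis
    proof (cases "f (x - 1) < g (x - 1)")
      case True
      have "\<forall>t<x. f t < g t"
        using ivt_left[OF ch nz1 \<open>x - 1 < x\<close>] True by force
      thus ?thesis by simp
    next
      case False
      hence "g (x - 1) < f (x - 1)" using nz by (metis \<open>x - 1 < x\<close> linorder_neqE_linordered_idom)
      hence "\<forall>t<x. g t < f t"
        using ivt_left[OF ch2 nz2 \<open>x - 1 < x\<close>] by force
      thus ?thesis by simp
    qed
  next
    assume nz: "\<forall>t>x. f t \<noteq> g t"
    have nz1: "\<forall>z>x. f z - g z \<noteq> 0" and nz2: "\<forall>z>x. g z - f z \<noteq> 0" using nz by auto
    have "x + 1 > x" by simp
    show ?thesis
    proof (cases "f (x + 1) < g (x + 1)")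
      case True
      have "\<forall>t>x. f t < g t"
        using ivt_right[OF ch nz1 \<open>x + 1 > x\<close>] True by force
      thus ?thesis by simp
    next
      case False
      hence "g (x + 1) < f (x + 1)" using nz by (metis \<open>x + 1 > x\<close> linorder_neqE_linordered_idom)
      hence "\<forall>t>x. g t < f t"
        using ivt_right[OF ch2 nz2 \<open>x + 1 > x\<close>] by force
      thus ?thesis by simp
    qed
  qed
qed

definition AL :: "(real \<Rightarrow> real) set \<Rightarrow> int \<Rightarrow> (real \<Rightarrow> real) \<Rightarrow> real set" where
  "AL F m g = {x. int (card {h\<in>F. h x < g x}) \<le> m \<and>
      (\<exists>f\<in>F. f \<noteq> g \<and> f x = g x \<and> (\<forall>t<x. f t < g t))}"

definition AR :: "(real \<Rightarrow> real) set \<Rightarrow> int \<Rightarrow> (real \<Rightarrow> real) \<Rightarrow> real set" where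
  "AR F m g = {x. int (card {h\<in>F. h x < g x}) \<le> m \<and>
      (\<exists>f\<in>F. f \<noteq> g \<and> f x = g x \<and> (\<forall>t>x. f t < g t))}"

lemma inter_finite:
  assumes P: "pseudo_parabolas F" and fin: "finite F" and g: "g \<in> F"
  shows "finite (\<Union>f\<in>F-{g}. {x. f x = g x})"
  using P fin g unfolding pseudo_parabolas_def by auto

lemma card_AL:
  assumes P: "pseudo_parabolas F" and fin: "finite F" and g: "g \<in> F"
  shows "card (AL F (int k - 2) g) \<le> k - 1"
proof -
  let ?A = "AL F (int k - 2) g"
  have finA: "finite ?A"
    by (rule finite_subset[OF _ inter_finite[OF P fin g]]) (auto simp: AL_def)
  show ?thesis
  proof (cases "?A = {}")
    case True thus ?thesis by simp
  next
    case False
    define x0 where "x0 = Min ?A"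
    have x0A: "x0 \<in> ?A" using Min_in[OF finA False] x0_def by simp
    have x0le: "\<And>x. x \<in> ?A \<Longrightarrow> x0 \<le> x" using finA x0_def by simp
    define B where "B = {h\<in>F. h x0 < g x0}"
    have cB: "int (card B) \<le> int k - 2" using x0A unfolding AL_def B_def by simp
    define w where "w x = (SOME f. f\<in>F \<and> f \<noteq> g \<and> f x = g x \<and> (\<forall>t<x. f t < g t))" for x
    have wP: "w x \<in> F \<and> w x \<noteq> g \<and> w x x = g x \<and> (\<forall>t<x. w x t < g t)" if "x \<in> ?A" for x
    proof -
      have "\<exists>f. f\<in>F \<and> f \<noteq> g \<and> f x = g x \<and> (\<forall>t<x. f t < g t)" using that unfolding AL_def by blast
      thus ?thesis unfolding w_def by (rule someI_ex)
    qed
    have inj: "inj_on w (?A - {x0})"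
    proof (rule inj_onI)
      fix a b assume a: "a \<in> ?A - {x0}" and b: "b \<in> ?A - {x0}" and e: "w a = w b"
      show "a = b"
      proof (rule ccontr)
        assume "a \<noteq> b"
        hence "a < b \<or> b < a" by auto
        thus False
        proof
          assume "a < b"
          hence "w b a < g a" using wP[of b] b by auto
          moreover have "w a a = g a" using wP[of a] a by auto
          ultimately show False using e by simp
        next
          assume "b < a"
          hence "w a b < g b" using wP[of a] a by auto
          moreover have "w b b = g b" using wP[of b] b by auto
          ultimately show False using e by simp
        qed
      qed
    qed
    have sub: "w ` (?A - {x0}) \<subseteq> B"
    proof
      fix y assume "y \<in> w ` (?A - {x0})"
      then obtain x where x: "x \<in> ?A" "x \<noteq> x0" and y: "y = w x" by auto
      have "x0 < x" using x0le[OF x(1)] x(2) by simp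
      thus "y \<in> B" using wP[OF x(1)] y unfolding B_def by auto
    qed
    have finB: "finite B" using fin unfolding B_def by simp
    have "card (?A - {x0}) \<le> card B"
      using card_inj_on_le[OF inj sub finB] .
    moreover have "card ?A = card (?A - {x0}) + 1"
      using card_Suc_Diff1[OF finA x0A] by simp
    ultimately show ?thesis using cB by linarith
  qed
qed

lemma card_AR:
  assumes P: "pseudo_parabolas F" and fin: "finite F" and g: "g \<in> F"
  shows "card (AR F (int k - 2) g) \<le> k - 1"
proof -
  let ?A = "AR F (int k - 2) g"
  have finA: "finite ?A"
    by (rule finite_subset[OF _ inter_finite[OF P fin g]]) (auto simp: AR_def)
  show ?thesis
  proof (cases "?A = {}")
    case True thus ?thesis by simp
  next
    case False
    define x0 where "x0 = Max ?A"
    have x0A: "x0 \<in> ?A" using Max_in[OF finA False] x0_def by simp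
    have x0le: "\<And>x. x \<in> ?A \<Longrightarrow> x \<le> x0" using finA x0_def by simp
    define B where "B = {h\<in>F. h x0 < g x0}"
    have cB: "int (card B) \<le> int k - 2" using x0A unfolding AR_def B_def by simp
    define w where "w x = (SOME f. f\<in>F \<and> f \<noteq> g \<and> f x = g x \<and> (\<forall>t>x. f t < g t))" for x
    have wP: "w x \<in> F \<and> w x \<noteq> g \<and> w x x = g x \<and> (\<forall>t>x. w x t < g t)" if "x \<in> ?A" for x
    proof -
      have "\<exists>f. f\<in>F \<and> f \<noteq> g \<and> f x = g x \<and> (\<forall>t>x. f t < g t)" using that unfolding AR_def by blast
      thus ?thesis unfolding w_def by (rule someI_ex)
    qed
    have inj: "inj_on w (?A - {x0})"
    proof (rule inj_onI)
      fix a b assume a: "a \<in> ?A - {x0}" and b: "b \<in> ?A - {x0}" and e: "w a = w b"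
      show "a = b"
      proof (rule ccontr)
        assume "a \<noteq> b"
        hence "a < b \<or> b < a" by auto
        thus False
        proof
          assume "a < b"
          hence "w a b < g b" using wP[of a] a by auto
          moreover have "w b b = g b" using wP[of b] b by auto
          ultimately show False using e by simp
        next
          assume "b < a"
          hence "w b a < g a" using wP[of b] b by auto
          moreover have "w a a = g a" using wP[of a] a by auto
          ultimately show False using e by simp
        qed
      qed
    qed
    have sub: "w ` (?A - {x0}) \<subseteq> B"
    proof
      fix y assume "y \<in> w ` (?A - {x0})"
      then obtain x where x: "x \<in> ?A" "x \<noteq> x0" and y: "y = w x" by auto
      have "x < x0" using x0le[OF x(1)] x(2) by simp
      thus "y \<in> B" using wP[OF x(1)] y unfolding B_def by auto
    qed
    have finB: "finite B" using fin unfolding B_def by simp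
    have "card (?A - {x0}) \<le> card B"
      using card_inj_on_le[OF inj sub finB] .
    moreover have "card ?A = card (?A - {x0}) + 1"
      using card_Suc_Diff1[OF finA x0A] by simp
    ultimately show ?thesis using cB by linarith
  qed
qed

theorem theorem4:
  fixes F :: "(real \<Rightarrow> real) set" and n k :: nat
  assumes "pseudo_parabolas F" and "finite F" and "card F = n" and "k \<ge> 1"
  shows "card (low_vertices F (int k - 2)) \<le> 2 * (k - 1) * n"
proof -
  let ?m = "int k - 2"
  let ?C = "\<lambda>g. (\<lambda>x. (x, g x)) ` (AL F ?m g \<union> AR F ?m g)"
  have sub: "low_vertices F ?m \<subseteq> (\<Union>g\<in>F. ?C g)"
  proof
    fix v assume "v \<in> low_vertices F ?m"
    then obtain x y f g where v: "v = (x, y)" and f: "f \<in> F" and g: "g \<in> F" and ne: "f \<noteq> g"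
      and fx: "f x = y" and gx: "g x = y" and lv: "int (card {h\<in>F. h x < y}) \<le> ?m"
      unfolding low_vertices_def by auto
    have e: "f x = g x" using fx gx by simp
    from side_free[OF assms(1) f g ne e]
    show "v \<in> (\<Union>g\<in>F. ?C g)"
    proof (elim disjE)
      assume "\<forall>t<x. f t < g t"
      hence "x \<in> AL F ?m g" using lv gx e f ne unfolding AL_def by auto
      thus ?thesis using g v gx by blast
    next
      assume "\<forall>t<x. g t < f t"
      hence "x \<in> AL F ?m f" using lv fx e g ne unfolding AL_def by auto
      thus ?thesis using f v fx by blast
    next
      assume "\<forall>t>x. f t < g t"
      hence "x \<in> AR F ?m g" using lv gx e f ne unfolding AR_def by auto
      thus ?thesis using g v gx by blast
    next
      assume "\<forall>t>x. g t < f t"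
      hence "x \<in> AR F ?m f" using lv fx e g ne unfolding AR_def by auto
      thus ?thesis using f v fx by blast
    qed
  qed
  have finL: "finite (AL F ?m g)" if "g \<in> F" for g
      by (rule finite_subset[OF _ inter_finite[OF assms(1,2) that]]) (auto simp: AL_def)
  have finR: "finite (AR F ?m g)" if "g \<in> F" for g
      by (rule finite_subset[OF _ inter_finite[OF assms(1,2) that]]) (auto simp: AR_def)
  have finC: "finite (?C g)" if "g \<in> F" for g using finL[OF that] finR[OF that] by simp
  have cC: "card (?C g) \<le> 2 * (k - 1)" if "g \<in> F" for g
  proof -
    have "card (?C g) \<le> card (AL F ?m g \<union> AR F ?m g)" by (rule card_image_le) (use finL finR that in auto)
    also have "\<dots> \<le> card (AL F ?m g) + card (AR F ?m g)" by (rule card_Un_le)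
    also have "\<dots> \<le> 2 * (k - 1)" using card_AL[OF assms(1,2) that, of k] card_AR[OF assms(1,2) that, of k] by simp
    finally show ?thesis .
  qed
  have "card (low_vertices F ?m) \<le> card (\<Union>g\<in>F. ?C g)"
    by (rule card_mono) (use finC assms(2) sub in auto)
  also have "\<dots> \<le> (\<Sum>g\<in>F. card (?C g))" by (rule card_UN_le[OF assms(2)])
  also have "\<dots> \<le> (\<Sum>g\<in>F. 2 * (k - 1))" by (rule sum_mono) (use cC in auto)
  also have "\<dots> = 2 * (k - 1) * n" using assms(3) by simp
  finally show ?thesis .
qed

end
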